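(* Let $f:\{0,1\}^n\to\mathbb{R}$ be an $s$-sparse polynomial of degree at most $d$ whose M\"obius coefficients satisfy subset-sum independence. Then the Fully-Adaptive Sparse M\"obius Transform (FASMT, described in the context) recovers all non-zero M\"obius coefficients of $f$ (locations and values) using $O(sd\log(n/d))$ adaptive queries to $f$ and $O((sd+n)\cdot sd\log(n/d))$ time.
   Context: Every $f:\{0,1\}^n\to\mathbb{R}$ has a unique expansion $f(\mathbf x)=\sum_{\mathbf k\le\mathbf x}F(\mathbf k)$ (real addition, $\le$ componentwise); the $F(\mathbf k)$ are its M\"obius coefficients. $f$ is $s$-sparse if at most $s$ coefficients are non-zero, and of degree at most $d$ if every $\mathbf k$ with $F(\mathbf k)\ne0$ has Hamming weight at most $d$. Subset-sum independence: for every non-empty $K\subseteq\{\mathbf k:F(\mathbf k)\ne0\}$, $\sum_{\mathbf k\in K}F(\mathbf k)\ne0$. Access to $f$ is via an evaluation oracle returning $f(\mathbf x)$. Boolean products are over the Boolean semiring (OR, AND), $\neg$ is bitwise negation, $\|$ concatenation; $\prec$ is lexicographic order on binary strings (a proper prefix is smaller; otherwise compare at the first differing position). Hwang's generalized binary splitting algorithm (GBSA) is a deterministic adaptive group-testing procedure that identifies an unknown $\mathbf k\in\{0,1\}^n$ with $|\mathbf k|\le d$ from tests $\mathbf h^\top\mathbf k\in\{0,1\}$ using $O(d\log(n/d))$ tests; it partitions $[n]$ into $d$ parts of size about $n/d$ and in each part repeatedly tests the part and, if positive, locates one element of the support by halving, removes it, and repeats. Given the string $\boldsymbol\ell$ of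 previous outcomes, GBSA$(\boldsymbol\ell)$ either returns a next test vector $\mathbf h$ or declares the result $\mathbf k$. FASMT: maintain a priority queue (lexicographic order on labels) of triples (label $\boldsymbol\ell$, bin sum $v$, matrix $\mathbf H$ of test vectors along the path), starting with $(\text{empty},f(\mathbf 1),\text{empty})$, and a table $T$ of discovered coefficients (initially zero). Repeatedly extract the minimal label; skip it if $v=0$; if GBSA$(\boldsymbol\ell)$ returns a result $\mathbf k$, set $T(\mathbf k)=v$; otherwise, with test vector $\mathbf h$, query $m=f(\mathbf x)-\sum_{\mathbf k\le\mathbf x}T(\mathbf k)$ at $\mathbf x=\neg((\mathbf H\|\mathbf h)\cdot\neg(\boldsymbol\ell\|0))$ and insert children $(\boldsymbol\ell\|0,m,\mathbf H\|\mathbf h)$ and $(\boldsymbol\ell\|1,v-m,\mathbf H\|\mathbf h)$. Output $T$ when the queue is empty. *)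

theory Defs
  imports Complex_Main
begin

text \<open>A point x in {0,1}^n is identified with its support, a subset of {..<n}.
  Componentwise order is set inclusion, Hamming weight is card, bitwise negation is
  complement relative to {..<n}.  A function f on {0,1}^n is a function on subsets
  of {..<n} (values elsewhere are irrelevant and never queried).\<close>

definition is_mobius_coeffs :: "nat \<Rightarrow> (nat set \<Rightarrow> real) \<Rightarrow> (nat set \<Rightarrow> real) \<Rightarrow> bool" where
  "is_mobius_coeffs n f F \<longleftrightarrow>
     (\<forall>k. F k \<noteq> 0 \<longrightarrow> k \<subseteq> {..<n}) \<and>
     (\<forall>x. x \<subseteq> {..<n} \<longrightarrow> f x = (\<Sum>k\<in>Pow x. F k))"

definition mob_support :: "(nat set \<Rightarrow> real) \<Rightarrow> nat set set" where
  "mob_support F = {k. F k \<noteq> 0}"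

definition sparse :: "nat \<Rightarrow> (nat set \<Rightarrow> real) \<Rightarrow> bool" where
  "sparse s F \<longleftrightarrow> card (mob_support F) \<le> s"

definition degree_le :: "nat \<Rightarrow> (nat set \<Rightarrow> real) \<Rightarrow> bool" where
  "degree_le d F \<longleftrightarrow> (\<forall>k. F k \<noteq> 0 \<longrightarrow> card k \<le> d)"

definition subset_sum_independent :: "(nat set \<Rightarrow> real) \<Rightarrow> bool" where
  "subset_sum_independent F \<longleftrightarrow>
     (\<forall>K. K \<subseteq> mob_support F \<longrightarrow> K \<noteq> {} \<longrightarrow> sum F K \<noteq> 0)"

fun lex_less :: "bool list \<Rightarrow> bool list \<Rightarrow> bool" where
  "lex_less [] ys = (ys \<noteq> [])"
| "lex_less (x # xs) [] = False"
| "lex_less (x # xs) (y # ys) = (if x = y then lex_less xs ys else (\<not> x \<and> y))"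

definition gbsa_part :: "nat \<Rightarrow> nat \<Rightarrow> nat \<Rightarrow> nat list" where
  "gbsa_part n d j = [j * n div d ..< (Suc j) * n div d]"

text \<open>States: Done K (result found); PartT j R K: about to test the remaining
  elements R of part j; SearchT j R C K: C \<subseteq> R is known to contain a
  positive, halving is in progress.  K is the support found so far.\<close>
datatype gstate =
    GDone "nat set"
  | PartT nat "nat list" "nat set"
  | SearchT nat "nat list" "nat list" "nat set"

definition gbsa_start_part :: "nat \<Rightarrow> nat \<Rightarrow> nat \<Rightarrow> nat set \<Rightarrow> gstate" where
  "gbsa_start_part n d j K = (if d \<le> j then GDone K else PartT j (gbsa_part n d j) K)"

definition gbsa_found :: "nat \<Rightarrow> nat \<Rightarrow> nat \<Rightarrow> nat list \<Rightarrow> nat \<Rightarrow> nat set \<Rightarrow> gstate" where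
  "gbsa_found n d j R c K =
     (let R' = remove1 c R; K' = insert c K
      in if R' = [] then gbsa_start_part n d (Suc j) K' else PartT j R' K')"

definition gbsa_search :: "nat \<Rightarrow> nat \<Rightarrow> nat \<Rightarrow> nat list \<Rightarrow> nat list \<Rightarrow> nat set \<Rightarrow> gstate" where
  "gbsa_search n d j R C K =
     (if length C \<le> 1 then gbsa_found n d j R (hd C) K else SearchT j R C K)"

text \<open>Transition on a test outcome b (True = 1 = positive).\<close>
fun gbsa_trans :: "nat \<Rightarrow> nat \<Rightarrow> gstate \<Rightarrow> bool \<Rightarrow> gstate" where
  "gbsa_trans n d (GDone K) b = GDone K"
| "gbsa_trans n d (PartT j R K) b =
     (if b then gbsa_search n d j R R K else gbsa_start_part n d (Suc j) K)"
| "gbsa_trans n d (SearchT j R C K) b =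
     (let h = length C div 2 in
      if b then gbsa_search n d j R (take h C) K else gbsa_search n d j R (drop h C) K)"

definition gbsa_state :: "nat \<Rightarrow> nat \<Rightarrow> bool list \<Rightarrow> gstate" where
  "gbsa_state n d ls = foldl (gbsa_trans n d) (gbsa_start_part n d 0 {}) ls"

datatype gresult = GTest "nat set" | GResult "nat set"

definition gbsa :: "nat \<Rightarrow> nat \<Rightarrow> bool list \<Rightarrow> gresult" where
  "gbsa n d ls = (case gbsa_state n d ls of
       GDone K \<Rightarrow> GResult K
     | PartT j R K \<Rightarrow> GTest (set R)
     | SearchT j R C K \<Rightarrow> GTest (set (take (length C div 2) C)))"

type_synonym qentry = "bool list \<times> real \<times> nat set list"

fun pq_insert :: "qentry \<Rightarrow> qentry list \<Rightarrow> qentry list" where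
  "pq_insert e [] = [e]"
| "pq_insert e (e' # q) = (if lex_less (fst e) (fst e') then e # e' # q else e' # pq_insert e q)"

text \<open>Query point x = not((H || h) . not(l || 0)) over the Boolean semiring, i.e. the
  complement of the union of the tests whose outcome bit is 0 (including the new test h).\<close>
definition query_point :: "nat \<Rightarrow> bool list \<Rightarrow> nat set list \<Rightarrow> nat set \<Rightarrow> nat set" where
  "query_point n l H h =
     {..<n} - ((\<Union>i\<in>{i. i < length l \<and> \<not> l ! i}. H ! i) \<union> h)"

record fstate =
  queue :: "qentry list"
  table :: "nat set \<Rightarrow> real"
  nqueries :: nat
  cost :: real

text \<open>Cost model (elementary operations): every iteration pays 1 + log2(queue length + 1)
  for the priority-queue operation; a call of GBSA and writing its output cost n;
  forming the query point costs n; the residual sum over the table costs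
  sum over stored coefficients k of (|k| + 1).\<close>
definition fasmt_step :: "nat \<Rightarrow> nat \<Rightarrow> (nat set \<Rightarrow> real) \<Rightarrow> fstate \<Rightarrow> fstate" where
  "fasmt_step n d f st =
    (case queue st of
       [] \<Rightarrow> st
     | (l, v, H) # Q \<Rightarrow>
         (let base = cost st + 1 + log 2 (real (length (queue st)) + 1) in
          if v = 0 then st\<lparr>queue := Q, cost := base\<rparr>
          else (case gbsa n d l of
                  GResult k \<Rightarrow> st\<lparr>queue := Q, table := (table st)(k := v),
                                   cost := base + real n\<rparr>
                | GTest h \<Rightarrow>
                    (let x = query_point n l H h;
                         m = f x - (\<Sum>k\<in>Pow x. table st k)
                     in st\<lparr>queue := pq_insert (l @ [True], v - m, H @ [h])
                                       (pq_insert (l @ [False], m, H @ [h]) Q),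
                           nqueries := Suc (nqueries st),
                           cost := base + 2 * real n
                                   + (\<Sum>k\<in>{k. table st k \<noteq> 0}. real (card k) + 1)\<rparr>))))"

definition fasmt_init :: "nat \<Rightarrow> (nat set \<Rightarrow> real) \<Rightarrow> fstate" where
  "fasmt_init n f = \<lparr>queue = [([], f {..<n}, [])], table = (\<lambda>_. 0),
                      nqueries = 1, cost = real n\<rparr>"

definition fasmt_iter :: "nat \<Rightarrow> nat \<Rightarrow> (nat set \<Rightarrow> real) \<Rightarrow> nat \<Rightarrow> fstate" where
  "fasmt_iter n d f t = (fasmt_step n d f ^^ t) (fasmt_init n f)"

end

theory Submission
  imports Defs "HOL-Library.Sublist"
begin


definition dl :: "bool list \<Rightarrow> bool list \<Rightarrow> bool" where
  "dl a b \<longleftrightarrow> (\<exists>u r1 r2. a = u @ False # r1 \<and> b = u @ True # r2)"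

lemma dl_Nil1[simp]: "\<not> dl [] b" by (auto simp: dl_def)
lemma dl_Nil2[simp]: "\<not> dl a []" by (auto simp: dl_def)
lemma dl_Cons[simp]: "dl (x # a) (y # b) \<longleftrightarrow> (if x = y then dl a b else (\<not> x \<and> y))"
proof
  assume "dl (x # a) (y # b)"
  then obtain u r1 r2 where h1: "x # a = u @ False # r1" and h2: "y # b = u @ True # r2"
    unfolding dl_def by blast
  show "(if x = y then dl a b else (\<not> x \<and> y))"
  proof (cases u)
    case Nil then have "x = False" "y = True" using h1 h2 by simp_all
    then show ?thesis by simp
  next
    case (Cons z u')
    then have "x = z" "y = z" "a = u' @ False # r1" "b = u' @ True # r2" using h1 h2 by simp_all
    then have "x = y" "dl a b" unfolding dl_def by blast+
    then show ?thesis by simp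
  qed
next
  assume h: "(if x = y then dl a b else (\<not> x \<and> y))"
  show "dl (x # a) (y # b)"
  proof (cases "x = y")
    case True
    then obtain u r1 r2 where "a = u @ False # r1" "b = u @ True # r2" using h unfolding dl_def by auto
    then have "x # a = (x # u) @ False # r1" "y # b = (x # u) @ True # r2" using True by simp_all
    then show ?thesis unfolding dl_def by blast
  next
    case False
    then have "x = False" "y = True" using h by auto
    then have "x # a = [] @ False # a" "y # b = [] @ True # b" by simp_all
    then show ?thesis unfolding dl_def by blast
  qed
qed

lemma dl_lex: "dl a b \<Longrightarrow> lex_less a b"
  by (induction a b rule: lex_less.induct) (auto split: if_splits)

lemma dl_not_lex: "dl a b \<Longrightarrow> \<not> lex_less b a"
  by (induction a b rule: lex_less.induct) (auto split: if_splits)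

lemma dl_trans: "dl a b \<Longrightarrow> dl b c \<Longrightarrow> dl a c"
proof (induction a arbitrary: b c)
  case Nil then show ?case by simp
next
  case (Cons x a)
  then obtain y b' where b: "b = y # b'" by (cases b) auto
  with Cons obtain z c' where c: "c = z # c'" by (cases c) auto
  have 1: "dl (x # a) (y # b')" and 2: "dl (y # b') (z # c')" using Cons.prems b c by auto
  show ?case
  proof (cases "x = y")
    case True
    then have "dl a b'" using 1 by simp
    show ?thesis
    proof (cases "y = z")
      case True
      then have "dl b' c'" using 2 by simp
      then show ?thesis using Cons.IH \<open>dl a b'\<close> \<open>x = y\<close> True c by simp
    next
      case False
      then show ?thesis using 2 \<open>x = y\<close> c by simp
    qed
  next
    case False
    then have "\<not> x" "y" using 1 by auto
    then show ?thesis using 2 c by (cases z) auto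
  qed
qed

lemma dl_irrefl: "\<not> dl a a"
  by (induction a) simp_all

lemma dl_append1: "dl a b \<Longrightarrow> dl (a @ x) b"
proof (induction a arbitrary: b)
  case Nil then show ?case by simp
next
  case (Cons y a)
  then obtain z b' where b: "b = z # b'" by (cases b) auto
  show ?case
  proof (cases "y = z")
    case True then show ?thesis using Cons b by simp
  next
    case False then show ?thesis using Cons.prems b by simp
  qed
qed

lemma dl_append2: "dl a b \<Longrightarrow> dl a (b @ x)"
proof (induction a arbitrary: b)
  case Nil then show ?case by simp
next
  case (Cons y a)
  then obtain z b' where b: "b = z # b'" by (cases b) auto
  show ?case
  proof (cases "y = z")
    case True then show ?thesis using Cons b by simp
  next
    case False then show ?thesis using Cons.prems b by simp
  qed
qed

lemma dl_prefix1: "dl a b \<Longrightarrow> prefix a a' \<Longrightarrow> dl a' b"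
  unfolding prefix_def using dl_append1 by blast

lemma dl_prefix2: "dl a b \<Longrightarrow> prefix b b' \<Longrightarrow> dl a b'"
  unfolding prefix_def using dl_append2 by blast

lemma dl_not_prefix1: "dl a b \<Longrightarrow> \<not> prefix a b"
  using dl_prefix1[of a b b] dl_irrefl[of b] by auto

lemma dl_not_prefix2: "dl a b \<Longrightarrow> \<not> prefix b a"
  using dl_prefix2[of a b a] dl_irrefl[of a] by auto

lemma dl_cases: "prefix a b \<or> prefix b a \<or> dl a b \<or> dl b a"
proof (induction a arbitrary: b)
  case Nil then show ?case by simp
next
  case (Cons x a)
  show ?case
  proof (cases b)
    case Nil then show ?thesis by simp
  next
    case (Cons y b')
    show ?thesis
    proof (cases "x = y")
      case True then show ?thesis using Cons.IH[of b'] Cons by auto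
    next
      case False then show ?thesis using Cons by (cases x) auto
    qed
  qed
qed

lemma pq_insert_set: "set (pq_insert e Q) = insert e (set Q)"
  by (induction e Q rule: pq_insert.induct) auto

lemma pq_insert_length: "length (pq_insert e Q) = Suc (length Q)"
  by (induction e Q rule: pq_insert.induct) auto

lemma pq_insert_sum: "sum_list (map (g :: _ \<Rightarrow> 'b::comm_monoid_add) (pq_insert e Q)) = g e + sum_list (map g Q)"
  by (induction e Q rule: pq_insert.induct) (auto simp: algebra_simps)

lemma pq_insert_sorted:
  assumes "sorted_wrt (\<lambda>x y. dl (fst x) (fst y)) Q"
    and "\<forall>e' \<in> set Q. dl (fst e) (fst e') \<or> dl (fst e') (fst e)"
  shows "sorted_wrt (\<lambda>x y. dl (fst x) (fst y)) (pq_insert e Q)"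
  using assms
proof (induction e Q rule: pq_insert.induct)
  case (1 e) then show ?case by simp
next
  case (2 e e' q)
  show ?case
  proof (cases "lex_less (fst e) (fst e')")
    case True
    then have "dl (fst e) (fst e')" using 2(3) dl_not_lex by auto
    moreover have "\<forall>x\<in>set q. dl (fst e) (fst x)"
      using 2(2,3) True dl_not_lex dl_trans calculation by fastforce
    ultimately show ?thesis using True 2(2) by simp
  next
    case False
    then have "dl (fst e') (fst e)" using 2(3) dl_lex by auto
    then show ?thesis using False 2 by (auto simp: pq_insert_set)
  qed
qed



fun clog :: "nat \<Rightarrow> nat" where
  "clog m = (if m \<le> 1 then 0 else Suc (clog ((m + 1) div 2)))"
declare clog.simps[simp del]

lemma clog_mono: "a \<le> b \<Longrightarrow> clog a \<le> clog b"
proof (induction b arbitrary: a rule: clog.induct)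
  case (1 b)
  show ?case
  proof (cases "a \<le> 1")
    case True then show ?thesis by (simp add: clog.simps)
  next
    case False
    then have "\<not> b \<le> 1" using 1 by auto
    then have "clog ((a + 1) div 2) \<le> clog ((b + 1) div 2)"
      using 1 by (simp add: div_le_mono)
    then show ?thesis using False \<open>\<not> b \<le> 1\<close> by (simp add: clog.simps[of a] clog.simps[of b])
  qed
qed

lemma clog_le: "m \<le> 2 ^ e \<Longrightarrow> clog m \<le> e"
proof (induction e arbitrary: m)
  case 0 then show ?case by (simp add: clog.simps)
next
  case (Suc e)
  show ?case
  proof (cases "m \<le> 1")
    case True then show ?thesis by (simp add: clog.simps)
  next
    case False
    have "(m + 1) div 2 \<le> 2 ^ e" using Suc.prems by simp
    then have "clog ((m + 1) div 2) \<le> e" using Suc.IH by blast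
    then show ?thesis using False by (simp add: clog.simps[of m])
  qed
qed

lemma clog_half: "2 \<le> m \<Longrightarrow> h \<le> (m + 1) div 2 \<Longrightarrow> clog h < clog m"
  using clog_mono[of h "(m+1) div 2"] by (simp add: clog.simps[of m])

fun isdone :: "gstate \<Rightarrow> bool" where
  "isdone (GDone K) = True" | "isdone _ = False"

fun tset :: "gstate \<Rightarrow> nat set" where
  "tset (GDone K) = {}"
| "tset (PartT j R K) = set R"
| "tset (SearchT j R C K) = set (take (length C div 2) C)"

lemma gbsa_state_snoc: "gbsa_state n d (l @ [b]) = gbsa_trans n d (gbsa_state n d l) b"
  by (simp add: gbsa_state_def)

lemma gbsa_test: "\<not> isdone (gbsa_state n d l) \<Longrightarrow> gbsa n d l = GTest (tset (gbsa_state n d l))"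
  by (cases "gbsa_state n d l") (auto simp: gbsa_def)

lemma gbsa_done: "gbsa_state n d l = GDone K \<Longrightarrow> gbsa n d l = GResult K"
  by (simp add: gbsa_def)

locale gb =
  fixes n d e :: nat and k :: "nat set"
  assumes d1: "1 \<le> d" and dn: "d \<le> n" and kn: "k \<subseteq> {..<n}"
    and parts: "\<And>j. Suc j * n div d - j * n div d \<le> 2 ^ e"
begin

definition lo :: "nat \<Rightarrow> nat" where "lo j = j * n div d"

lemma lo_mono: "i \<le> j \<Longrightarrow> lo i \<le> lo j"
  unfolding lo_def by (simp add: div_le_mono)

lemma lo_d: "lo d = n"
  using d1 unfolding lo_def by simp

lemma set_part: "set (gbsa_part n d j) = {lo j..<lo (Suc j)}"
  by (simp add: gbsa_part_def lo_def)

lemma distinct_part: "distinct (gbsa_part n d j)"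
  by (simp add: gbsa_part_def)

lemma fin_k: "finite k" using kn finite_subset by blast

definition goodP :: "nat \<Rightarrow> nat list \<Rightarrow> nat set \<Rightarrow> bool" where
  "goodP j R K = (j < d \<and> distinct R \<and> set R \<subseteq> {lo j..<lo (Suc j)} \<and>
                         K = k \<inter> ({..<lo (Suc j)} - set R))"

fun good :: "gstate \<Rightarrow> bool" where
  "good (GDone K) = (K = k)"
| "good (PartT j R K) = goodP j R K"
| "good (SearchT j R C K) = (goodP j R K \<and> set C \<subseteq> set R \<and> k \<inter> set C \<noteq> {} \<and> 2 \<le> length C)"

declare goodP_def[simp]

fun bnd :: "gstate \<Rightarrow> nat" where
  "bnd (GDone K) = 0"
| "bnd (PartT j R K) = (d - j) + card (k - K) * (1 + e)"
| "bnd (SearchT j R C K) = clog (length C) + (d - j) + (card (k - K) - 1) * (1 + e)"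

lemma len_R: "good (PartT j R K) \<Longrightarrow> clog (length R) \<le> e"
proof -
  assume g: "good (PartT j R K)"
  then have "length R = card (set R)" by (simp add: distinct_card)
  also have "\<dots> \<le> card {lo j..<lo (Suc j)}" using g by (intro card_mono) auto
  also have "\<dots> \<le> 2 ^ e" using parts[of j] by (simp add: lo_def)
  finally show ?thesis by (rule clog_le)
qed

lemma start_good:
  assumes "j \<le> d" "K = k \<inter> {..<lo j}"
  shows "good (gbsa_start_part n d j K) \<and> bnd (gbsa_start_part n d j K) \<le> (d - j) + card (k - K) * (1 + e)"
proof (cases "d \<le> j")
  case True
  then have "j = d" using assms by simp
  then have "K = k" using assms kn lo_d by auto
  then show ?thesis using True by (simp add: gbsa_start_part_def)
next
  case False
  have "lo j \<le> lo (Suc j)" by (simp add: lo_mono)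
  then have "K = k \<inter> ({..<lo (Suc j)} - {lo j..<lo (Suc j)})" using assms by auto
  then show ?thesis using False by (simp add: gbsa_start_part_def set_part distinct_part)
qed

lemma found_good:
  assumes g: "good (PartT j R K)" and c: "c \<in> set R" "c \<in> k"
  shows "good (gbsa_found n d j R c K) \<and> bnd (gbsa_found n d j R c K) \<le> (d - j) + (card (k - K) - 1) * (1 + e)"
proof -
  define R' where "R' = remove1 c R"
  define K' where "K' = insert c K"
  have dR: "distinct R" using g by simp
  have sR': "set R' = set R - {c}" using dR by (simp add: R'_def)
  have cK: "c \<notin> K" using g c by auto
  have cardK: "card (k - K') = card (k - K) - 1"
  proof -
    have "k - K' = (k - K) - {c}" by (auto simp: K'_def)
    then show ?thesis using c cK fin_k by (simp add: card_Diff_singleton)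
  qed
  have K': "K' = k \<inter> ({..<lo (Suc j)} - set R')"
    using g c by (auto simp: K'_def sR')
  show ?thesis
  proof (cases "R' = []")
    case True
    then have "K' = k \<inter> {..<lo (Suc j)}" using K' by simp
    then have "good (gbsa_start_part n d (Suc j) K') \<and> bnd (gbsa_start_part n d (Suc j) K') \<le> (d - Suc j) + card (k - K') * (1 + e)"
      using g by (intro start_good) auto
    moreover have "gbsa_found n d j R c K = gbsa_start_part n d (Suc j) K'"
      using True by (simp add: gbsa_found_def R'_def K'_def)
    ultimately show ?thesis using cardK by auto
  next
    case False
    have "gbsa_found n d j R c K = PartT j R' K'"
      using False by (simp add: gbsa_found_def R'_def K'_def Let_def)
    moreover have "good (PartT j R' K')" using g K' sR' by (auto simp: R'_def)
    ultimately show ?thesis using cardK by simp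
  qed
qed

lemma search_good:
  assumes g: "good (PartT j R K)" and C: "set C \<subseteq> set R" "k \<inter> set C \<noteq> {}"
  shows "good (gbsa_search n d j R C K) \<and>
         bnd (gbsa_search n d j R C K) \<le> clog (length C) + (d - j) + (card (k - K) - 1) * (1 + e)"
proof (cases "length C \<le> 1")
  case True
  then obtain c where "C = [c]" using C by (cases C) auto
  then have "c \<in> set R" "c \<in> k" using C by auto
  then have "good (gbsa_found n d j R c K) \<and> bnd (gbsa_found n d j R c K) \<le> (d - j) + (card (k - K) - 1) * (1 + e)"
    using found_good g by blast
  then show ?thesis using \<open>C = [c]\<close> by (simp add: gbsa_search_def)
next
  case False
  then show ?thesis using g C by (simp add: gbsa_search_def)
qed

lemma cardK_pos: "good (PartT j R K) \<Longrightarrow> k \<inter> set C \<noteq> {} \<Longrightarrow> set C \<subseteq> set R \<Longrightarrow> 1 \<le> card (k - K)"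
proof -
  assume g: "good (PartT j R K)" and h: "k \<inter> set C \<noteq> {}" and s: "set C \<subseteq> set R"
  then obtain c where "c \<in> k" "c \<in> set R" by auto
  then have "c \<in> k - K" using g by auto
  then have "k - K \<noteq> {}" by auto
  then show ?thesis using fin_k by (simp add: Suc_leI card_gt_0_iff)
qed

lemma step_good:
  assumes g: "good st" and nd: "\<not> isdone st"
  shows "good (gbsa_trans n d st (tset st \<inter> k \<noteq> {})) \<and> bnd (gbsa_trans n d st (tset st \<inter> k \<noteq> {})) < bnd st"
proof (cases st)
  case (GDone K) then show ?thesis using nd by simp
next
  case (PartT j R K)
  have gP: "good (PartT j R K)" using g PartT by simp
  show ?thesis
  proof (cases "set R \<inter> k \<noteq> {}")
    case True
    then have kR: "k \<inter> set R \<noteq> {}" by auto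
    have 1: "good (gbsa_search n d j R R K) \<and> bnd (gbsa_search n d j R R K) \<le> clog (length R) + (d - j) + (card (k - K) - 1) * (1 + e)"
      using search_good[OF gP _ kR] by simp
    have "clog (length R) \<le> e" using len_R gP by blast
    moreover have "1 \<le> card (k - K)" using cardK_pos[OF gP kR] by simp
    ultimately have "clog (length R) + (d - j) + (card (k - K) - 1) * (1 + e) < (d - j) + card (k - K) * (1 + e)"
      by (cases "card (k - K)") auto
    then show ?thesis using 1 PartT True by simp
  next
    case False
    then have "K = k \<inter> {..<lo (Suc j)}" using gP by auto
    then have 1: "good (gbsa_start_part n d (Suc j) K) \<and> bnd (gbsa_start_part n d (Suc j) K) \<le> (d - Suc j) + card (k - K) * (1 + e)"
      using gP by (intro start_good) auto
    have "j < d" using gP by simp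
    then show ?thesis using 1 PartT False by auto
  qed
next
  case (SearchT j R C K)
  have gP: "good (PartT j R K)" and CR: "set C \<subseteq> set R" and kC: "k \<inter> set C \<noteq> {}" and lC: "2 \<le> length C"
    using g SearchT by auto
  define h where "h = length C div 2"
  have setC: "set C = set (take h C) \<union> set (drop h C)"
    by (metis append_take_drop_id set_append)
  have pos: "1 \<le> card (k - K)" using cardK_pos[OF gP kC CR] .
  show ?thesis
  proof (cases "set (take h C) \<inter> k \<noteq> {}")
    case True
    have s1: "set (take h C) \<subseteq> set R" using CR set_take_subset by fastforce
    have 1: "good (gbsa_search n d j R (take h C) K) \<and> bnd (gbsa_search n d j R (take h C) K) \<le> clog (length (take h C)) + (d - j) + (card (k - K) - 1) * (1 + e)"
      using search_good[OF gP s1] True by (simp add: Int_commute)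
    have "clog (length (take h C)) < clog (length C)"
      using lC by (intro clog_half) (auto simp: h_def)
    then show ?thesis using 1 SearchT True by (simp add: h_def Let_def)
  next
    case False
    have s1: "set (drop h C) \<subseteq> set R" using CR set_drop_subset by fastforce
    have kd: "k \<inter> set (drop h C) \<noteq> {}" using False kC setC by auto
    have 1: "good (gbsa_search n d j R (drop h C) K) \<and> bnd (gbsa_search n d j R (drop h C) K) \<le> clog (length (drop h C)) + (d - j) + (card (k - K) - 1) * (1 + e)"
      using search_good[OF gP s1 kd] by simp
    have "clog (length (drop h C)) < clog (length C)"
      using lC by (intro clog_half) (auto simp: h_def)
    then show ?thesis using 1 SearchT False by (simp add: h_def Let_def)
  qed
qed

lemma run_exists:
  "good st \<Longrightarrow> \<exists>bs. length bs \<le> bnd st \<and> foldl (gbsa_trans n d) st bs = GDone k \<and>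
     (\<forall>i < length bs. \<not> isdone (foldl (gbsa_trans n d) st (take i bs)) \<and>
        (bs ! i \<longleftrightarrow> tset (foldl (gbsa_trans n d) st (take i bs)) \<inter> k \<noteq> {}))"
proof (induction "bnd st" arbitrary: st rule: less_induct)
  case less
  show ?case
  proof (cases "isdone st")
    case True
    then obtain K where "st = GDone K" by (cases st) auto
    then show ?thesis using less.prems by (intro exI[of _ "[]"]) simp
  next
    case False
    define b where "b = (tset st \<inter> k \<noteq> {})"
    define st' where "st' = gbsa_trans n d st b"
    have 1: "good st'" "bnd st' < bnd st" using step_good[OF less.prems False] by (simp_all add: st'_def b_def)
    obtain bs where bs: "length bs \<le> bnd st'" "foldl (gbsa_trans n d) st' bs = GDone k"
      "\<forall>i < length bs. \<not> isdone (foldl (gbsa_trans n d) st' (take i bs)) \<and>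
        (bs ! i \<longleftrightarrow> tset (foldl (gbsa_trans n d) st' (take i bs)) \<inter> k \<noteq> {})"
      using less.hyps[OF 1(2) 1(1)] by blast
    show ?thesis
    proof (intro exI[of _ "b # bs"] conjI allI impI)
      show "length (b # bs) \<le> bnd st" using bs(1) 1(2) by simp
      show "foldl (gbsa_trans n d) st (b # bs) = GDone k" using bs(2) by (simp add: st'_def)
    next
      fix i assume i: "i < length (b # bs)"
      show "\<not> isdone (foldl (gbsa_trans n d) st (take i (b # bs)))"
        using i bs(3) False by (cases i) (auto simp: st'_def)
      show "(b # bs) ! i \<longleftrightarrow> tset (foldl (gbsa_trans n d) st (take i (b # bs))) \<inter> k \<noteq> {}"
        using i bs(3) by (cases i) (auto simp: st'_def b_def)
    qed
  qed
qed

lemma path_exists: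
  "\<exists>bs. length bs \<le> d + card k * (1 + e) \<and> gbsa n d bs = GResult k \<and>
     (\<forall>i < length bs. gbsa n d (take i bs) = GTest (tset (gbsa_state n d (take i bs))) \<and>
        (bs ! i \<longleftrightarrow> tset (gbsa_state n d (take i bs)) \<inter> k \<noteq> {}))"
proof -
  have g0: "good (gbsa_start_part n d 0 {}) \<and> bnd (gbsa_start_part n d 0 {}) \<le> (d - 0) + card (k - {}) * (1 + e)"
    by (intro start_good) (auto simp: lo_def)
  obtain bs where bs: "length bs \<le> bnd (gbsa_start_part n d 0 {})"
    "foldl (gbsa_trans n d) (gbsa_start_part n d 0 {}) bs = GDone k"
    "\<forall>i < length bs. \<not> isdone (foldl (gbsa_trans n d) (gbsa_start_part n d 0 {}) (take i bs)) \<and>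
        (bs ! i \<longleftrightarrow> tset (foldl (gbsa_trans n d) (gbsa_start_part n d 0 {}) (take i bs)) \<inter> k \<noteq> {})"
    using run_exists g0 by blast
  show ?thesis
  proof (intro exI[of _ bs] conjI allI impI)
    show "length bs \<le> d + card k * (1 + e)" using bs(1) g0 by simp
    show "gbsa n d bs = GResult k" using bs(2) by (simp add: gbsa_def gbsa_state_def)
  next
    fix i assume i: "i < length bs"
    then show "gbsa n d (take i bs) = GTest (tset (gbsa_state n d (take i bs)))"
      using bs(3) gbsa_test by (simp add: gbsa_state_def)
    show "bs ! i \<longleftrightarrow> tset (gbsa_state n d (take i bs)) \<inter> k \<noteq> {}"
      using i bs(3) by (simp add: gbsa_state_def)
  qed
qed

end



definition test :: "nat \<Rightarrow> nat \<Rightarrow> bool list \<Rightarrow> nat set" where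
  "test n d l = tset (gbsa_state n d l)"

lemma gbsa_GTest: "gbsa n d l = GTest h \<Longrightarrow> h = test n d l"
  by (cases "gbsa_state n d l") (auto simp: gbsa_def test_def)

lemma prefix_snoc_nth: "prefix l xs \<Longrightarrow> length l < length xs \<Longrightarrow> prefix (l @ [xs ! length l]) xs"
  by (metis prefix_def append_eq_conv_conj append_take_drop_id take_Suc_conv_app_nth prefix_length_le take_all)

locale fa =
  fixes n d s :: nat and f F :: "nat set \<Rightarrow> real"
  assumes s1: "1 \<le> s" and d1: "1 \<le> d" and dn: "d \<le> n"
    and mob: "is_mobius_coeffs n f F" and sp: "sparse s F" and deg: "degree_le d F"
    and ind: "subset_sum_independent F"
begin

definition e :: nat where "e = nat \<lceil>log 2 (real (n div d + 1))\<rceil>"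

lemma ndiv_le: "n div d + 1 \<le> 2 ^ e"
proof -
  have m: "real (n div d + 1) \<ge> 1" by simp
  have lg: "log 2 (real (n div d + 1)) \<ge> 0" using m by simp
  have "real (n div d + 1) = 2 powr (log 2 (real (n div d + 1)))" using m by simp
  also have "\<dots> \<le> 2 powr (real e)"
  proof (intro powr_mono)
    have "real e = of_int \<lceil>log 2 (real (n div d + 1))\<rceil>" using lg by (simp add: e_def)
    then show "log 2 (real (n div d + 1)) \<le> real e" by (simp add: le_of_int_ceiling)
  qed simp
  also have "\<dots> = 2 ^ e" by (simp add: powr_realpow)
  finally have "real (n div d + 1) \<le> real (2 ^ e)" by simp
  then show ?thesis by (simp only: of_nat_le_iff)
qed

lemma parts: "Suc j * n div d - j * n div d \<le> 2 ^ e"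
proof -
  have "Suc j * n div d = (j * n + n) div d" by (simp add: add.commute)
  also have "\<dots> \<le> j * n div d + n div d + 1"
  proof -
    have "(j * n + n) div d = j * n div d + n div d + (j * n mod d + n mod d) div d"
      by (rule div_add1_eq)
    moreover have "(j * n mod d + n mod d) div d \<le> 1"
    proof -
      have "j * n mod d < d" "n mod d < d" using d1 by simp_all
      then have "j * n mod d + n mod d < 2 * d" by linarith
      then show ?thesis using less_mult_imp_div_less[of "j * n mod d + n mod d" 2 d] by simp
    qed
    ultimately show ?thesis by simp
  qed
  finally show ?thesis using ndiv_le by linarith
qed

definition S :: "nat set set" where "S = mob_support F"

lemma S_sub: "k \<in> S \<Longrightarrow> k \<subseteq> {..<n}"
  using mob by (auto simp: S_def mob_support_def is_mobius_coeffs_def)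

lemma S_card: "k \<in> S \<Longrightarrow> card k \<le> d"
  using deg by (auto simp: S_def mob_support_def degree_le_def)

lemma S_fin: "finite S"
proof -
  have "S \<subseteq> Pow {..<n}" using S_sub by auto
  then show ?thesis by (rule finite_subset) simp
qed

lemma S_cardS: "card S \<le> s" using sp by (simp add: S_def sparse_def)

lemma notS: "k \<notin> S \<Longrightarrow> F k = 0" by (simp add: S_def mob_support_def)

lemma indep: "K \<subseteq> S \<Longrightarrow> K \<noteq> {} \<Longrightarrow> sum F K \<noteq> 0"
  using ind by (simp add: S_def subset_sum_independent_def)

definition pprop :: "nat set \<Rightarrow> bool list \<Rightarrow> bool" where
  "pprop k bs = (length bs \<le> d + card k * (1 + e) \<and> gbsa n d bs = GResult k \<and>
     (\<forall>i < length bs. gbsa n d (take i bs) = GTest (tset (gbsa_state n d (take i bs))) \<and>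
        (bs ! i \<longleftrightarrow> tset (gbsa_state n d (take i bs)) \<inter> k \<noteq> {})))"

definition path :: "nat set \<Rightarrow> bool list" where
  "path k = (SOME bs. pprop k bs)"

lemma path_prop: assumes "k \<subseteq> {..<n}" shows "pprop k (path k)"
proof -
  interpret gb n d e k using assms d1 dn parts by unfold_locales auto
  have "\<exists>bs. pprop k bs" using path_exists unfolding pprop_def by blast
  then show ?thesis unfolding path_def by (rule someI_ex)
qed

lemma path_len: "k \<in> S \<Longrightarrow> length (path k) \<le> d * (2 + e)"
proof -
  assume k: "k \<in> S"
  have "length (path k) \<le> d + card k * (1 + e)" using path_prop[OF S_sub[OF k]] by (simp add: pprop_def)
  also have "\<dots> \<le> d + d * (1 + e)" using S_card[OF k] mult_le_mono1[of "card k" d "1 + e"] by linarith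
  finally show ?thesis by (simp add: algebra_simps)
qed

lemma path_res: "k \<subseteq> {..<n} \<Longrightarrow> gbsa n d (path k) = GResult k"
  using path_prop by (simp add: pprop_def)

lemma path_nth: "k \<subseteq> {..<n} \<Longrightarrow> i < length (path k) \<Longrightarrow>
   gbsa n d (take i (path k)) = GTest (test n d (take i (path k))) \<and>
   (path k ! i \<longleftrightarrow> test n d (take i (path k)) \<inter> k \<noteq> {})"
  using path_prop by (simp add: pprop_def test_def)

lemma path_prefix:
  assumes k: "k \<subseteq> {..<n}" and p: "prefix l (path k)" and ne: "l \<noteq> path k"
  shows "gbsa n d l = GTest (test n d l) \<and> length l < length (path k) \<and>
         (path k ! length l \<longleftrightarrow> test n d l \<inter> k \<noteq> {})"
proof -
  have lt: "length l < length (path k)" using p ne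
    by (metis prefix_length_le prefix_length_prefix prefix_order.antisym order_le_less prefix_order.refl)
  have "l = take (length l) (path k)" using p by (metis append_eq_conv_conj prefix_def)
  then show ?thesis using path_nth[OF k lt] lt by metis
qed

lemma path_result:
  assumes k: "k \<subseteq> {..<n}" and p: "prefix l (path k)" and r: "gbsa n d l = GResult K"
  shows "l = path k \<and> K = k"
proof -
  have "l = path k" using path_prefix[OF k p] r by auto
  then show ?thesis using r path_res[OF k] by simp
qed

end



context fa begin

definition bin :: "bool list \<Rightarrow> nat set set" where
  "bin l = {k \<in> S. prefix l (path k)}"

definition Tr :: "bool list set" where
  "Tr = {l. \<exists>k\<in>S. prefix l (path k)}"

definition TrB :: "bool list \<Rightarrow> bool list set" where
  "TrB l = {l' \<in> Tr. prefix l l'}"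

lemma pre_snoc: "prefix (l @ [b]) x \<Longrightarrow> prefix l x"
  by (auto simp: prefix_def)

lemma Tr_eq: "Tr = (\<Union>k\<in>S. set (prefixes (path k)))"
  by (auto simp: Tr_def)

lemma Tr_fin: "finite Tr"
  unfolding Tr_eq using S_fin by simp

lemma Tr_card: "card Tr \<le> s * (d * (2 + e) + 1)"
proof -
  have "card Tr \<le> (\<Sum>k\<in>S. card (set (prefixes (path k))))"
    unfolding Tr_eq using S_fin by (rule card_UN_le)
  also have "\<dots> \<le> of_nat (card S) * (d * (2 + e) + 1)"
    by (intro sum_bounded_above) (use path_len in auto)
  also have "\<dots> = card S * (d * (2 + e) + 1)" by simp
  also have "\<dots> \<le> s * (d * (2 + e) + 1)" using S_cardS by (rule mult_le_mono1)
  finally show ?thesis .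
qed

lemma TrB_fin: "finite (TrB l)"
  using Tr_fin by (simp add: TrB_def)

lemma bin_fin: "finite (bin l)"
  using S_fin by (simp add: bin_def)

lemma bin_Tr: "bin l \<noteq> {} \<Longrightarrow> l \<in> Tr"
  by (auto simp: bin_def Tr_def)

lemma TrB_split:
  assumes "l \<in> Tr"
  shows "card (TrB l) = 1 + card (TrB (l @ [False])) + card (TrB (l @ [True]))"
proof -
  have eq: "TrB l = insert l (TrB (l @ [False]) \<union> TrB (l @ [True]))"
  proof
    show "TrB l \<subseteq> insert l (TrB (l @ [False]) \<union> TrB (l @ [True]))"
    proof
      fix l' assume l': "l' \<in> TrB l"
      show "l' \<in> insert l (TrB (l @ [False]) \<union> TrB (l @ [True]))"
      proof (cases "l' = l")
        case False
        have p: "prefix l l'" using l' by (simp add: TrB_def)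
        then have "length l < length l'" using False
          by (metis prefix_length_le prefix_length_prefix prefix_order.antisym order_le_less prefix_order.refl)
        then have "prefix (l @ [l' ! length l]) l'" using p prefix_snoc_nth by blast
        then show ?thesis using l' by (cases "l' ! length l") (auto simp: TrB_def)
      qed simp
    qed
  next
    show "insert l (TrB (l @ [False]) \<union> TrB (l @ [True])) \<subseteq> TrB l"
      using assms by (auto simp: TrB_def dest: pre_snoc)
  qed
  have n1: "l \<notin> TrB (l @ [False]) \<union> TrB (l @ [True])"
    by (auto simp: TrB_def dest: prefix_length_le)
  have dj: "TrB (l @ [False]) \<inter> TrB (l @ [True]) = {}"
    by (auto simp: TrB_def prefix_def)
  show ?thesis unfolding eq using n1 dj TrB_fin by (simp add: card_Un_disjoint)
qed

lemma TrB_empty: "l \<notin> Tr \<Longrightarrow> TrB l = {}"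
  by (auto simp: TrB_def Tr_def intro: prefix_order.trans)

lemma path_prefix_nth:
  assumes k: "k \<subseteq> {..<n}" and p: "prefix l' (path k)" and i: "i < length l'"
  shows "gbsa n d (take i l') = GTest (test n d (take i l')) \<and> (l' ! i \<longleftrightarrow> test n d (take i l') \<inter> k \<noteq> {})"
proof -
  obtain r where r: "path k = l' @ r" using p by (auto simp: prefix_def)
  have "i < length (path k)" using r i by simp
  moreover have "take i (path k) = take i l'" "path k ! i = l' ! i" using r i by (simp_all add: nth_append)
  ultimately show ?thesis using path_nth[OF k] by metis
qed

lemma bin_split:
  assumes "gbsa n d l = GTest h"
  shows "bin l = bin (l @ [False]) \<union> bin (l @ [True])" "bin (l @ [False]) \<inter> bin (l @ [True]) = {}"
proof -
  show "bin l = bin (l @ [False]) \<union> bin (l @ [True])"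
  proof
    show "bin l \<subseteq> bin (l @ [False]) \<union> bin (l @ [True])"
    proof
      fix k assume k: "k \<in> bin l"
      then have kS: "k \<in> S" and p: "prefix l (path k)" by (auto simp: bin_def)
      have "l \<noteq> path k" using assms path_res[OF S_sub[OF kS]] by auto
      then have "length l < length (path k)" using path_prefix[OF S_sub[OF kS] p] by simp
      then have "prefix (l @ [path k ! length l]) (path k)" using p prefix_snoc_nth by blast
      then show "k \<in> bin (l @ [False]) \<union> bin (l @ [True])" using kS
        by (cases "path k ! length l") (auto simp: bin_def)
    qed
  next
    show "bin (l @ [False]) \<union> bin (l @ [True]) \<subseteq> bin l"
      by (auto simp: bin_def dest: pre_snoc)
  qed
  show "bin (l @ [False]) \<inter> bin (l @ [True]) = {}"
    by (auto simp: bin_def prefix_def)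
qed

lemma bin_result:
  assumes "gbsa n d l = GResult K"
  shows "bin l \<subseteq> {K}"
  using path_result[OF S_sub _ assms] by (auto simp: bin_def)

definition ent :: "qentry \<Rightarrow> bool" where
  "ent q = (fst (snd q) = sum F (bin (fst q)) \<and> length (snd (snd q)) = length (fst q) \<and>
            (\<forall>i < length (fst q). gbsa n d (take i (fst q)) = GTest (snd (snd q) ! i)))"

definition covered :: "qentry list \<Rightarrow> nat set \<Rightarrow> bool" where
  "covered Q k = (\<exists>q\<in>set Q. prefix (fst q) (path k))"

definition Inv :: "fstate \<Rightarrow> bool" where
  "Inv st = (sorted_wrt (\<lambda>x y. dl (fst x) (fst y)) (queue st) \<and> (\<forall>q\<in>set (queue st). ent q) \<and>
     (\<forall>k. table st k = (if k \<in> S \<and> \<not> covered (queue st) k then F k else 0)) \<and>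
     (\<forall>k\<in>S. \<not> covered (queue st) k \<longrightarrow> (\<forall>q\<in>set (queue st). dl (path k) (fst q))))"

definition Phi :: "qentry list \<Rightarrow> nat" where
  "Phi Q = sum_list (map (\<lambda>q. 3 * card (TrB (fst q)) + 1) Q)"

definition Psi :: "qentry list \<Rightarrow> nat" where
  "Psi Q = sum_list (map (\<lambda>q. card (TrB (fst q))) Q)"

lemma len_Phi: "length Q \<le> Phi Q"
  unfolding Phi_def by (induction Q) auto

lemma query_sum:
  assumes I: "Inv st" and Qa: "queue st = (l, v, H) # Q" and g: "gbsa n d l = GTest h"
  shows "f (query_point n l H h) - (\<Sum>k\<in>Pow (query_point n l H h). table st k) = sum F (bin (l @ [False]))"
proof -
  define x where "x = query_point n l H h"
  define Z where "Z = (\<Union>i\<in>{i. i < length l \<and> \<not> l ! i}. H ! i)"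
  have x: "x = {..<n} - (Z \<union> h)" by (simp add: x_def Z_def query_point_def)
  have entl: "ent (l, v, H)" using I Qa by (simp add: Inv_def)
  then have Hi: "\<And>i. i < length l \<Longrightarrow> H ! i = test n d (take i l)"
    using gbsa_GTest by (simp add: ent_def)
  have valid: "\<And>i. i < length l \<Longrightarrow> gbsa n d (take i l) = GTest (H ! i)"
    using entl by (simp add: ent_def)
  have hl: "h = test n d l" using g by (rule gbsa_GTest)
  have sorted: "sorted_wrt (\<lambda>x y. dl (fst x) (fst y)) ((l, v, H) # Q)" using I Qa by (simp add: Inv_def)
  have tab: "\<And>k. table st k = (if k \<in> S \<and> \<not> covered (queue st) k then F k else 0)"
    using I by (simp add: Inv_def)
  define U where "U = {k \<in> Pow x. k \<in> S \<and> \<not> covered (queue st) k}"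
  have xfin: "finite (Pow x)" using x by simp
  have fx: "f x = sum F (Pow x)" using mob x by (simp add: is_mobius_coeffs_def)
  have A: "sum F (Pow x) = sum F (Pow x \<inter> S)"
  proof (rule sum.mono_neutral_right)
    show "\<forall>i\<in>Pow x - Pow x \<inter> S. F i = 0" using notS by blast
  qed (use xfin in auto)
  have B: "(\<Sum>k\<in>Pow x. table st k) = sum F U"
    unfolding U_def tab using sum.inter_filter[OF xfin, of F "\<lambda>k. k \<in> S \<and> \<not> covered (queue st) k"] by simp
  have c1: "bin (l @ [False]) \<subseteq> Pow x"
  proof
    fix k assume k: "k \<in> bin (l @ [False])"
    then have kS: "k \<in> S" and p: "prefix (l @ [False]) (path k)" by (auto simp: bin_def)
    have kn: "k \<subseteq> {..<n}" using S_sub kS .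
    have "k \<inter> H ! i = {}" if i: "i < length l" "\<not> l ! i" for i
    proof -
      have "i < length (l @ [False])" using i by simp
      from path_prefix_nth[OF kn p this] i show ?thesis using Hi[OF i(1)]
        by (auto simp: nth_append)
    qed
    then have kZ: "k \<inter> Z = {}" by (auto simp: Z_def)
    have "length l < length (l @ [False])" by simp
    from path_prefix_nth[OF kn p this] have "k \<inter> h = {}" using hl by auto
    then show "k \<in> Pow x" using kZ kn x by auto
  qed
  have c2: "\<And>k. k \<in> bin (l @ [False]) \<Longrightarrow> covered (queue st) k"
    unfolding covered_def Qa by (auto simp: bin_def dest: pre_snoc)
  have c3: "k \<in> bin (l @ [False])" if kS: "k \<in> S" and kx: "k \<subseteq> x" and cov: "covered (queue st) k" for k
  proof -
    have kn: "k \<subseteq> {..<n}" using S_sub kS .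
    have res: "gbsa n d (path k) = GResult k" using path_res[OF kn] .
    consider "prefix (path k) l" | "prefix l (path k)" | "dl l (path k)" | "dl (path k) l"
      using dl_cases by blast
    then show ?thesis
    proof cases
      case 1
      then have "path k = take (length (path k)) l" "length (path k) \<le> length l"
        by (auto simp: prefix_def)
      then show ?thesis using valid g res
        by (metis gresult.distinct(1) order_le_less take_all)
    next
      case 2
      have "l \<noteq> path k" using g res by auto
      then have pp: "length l < length (path k)" "path k ! length l \<longleftrightarrow> test n d l \<inter> k \<noteq> {}"
        using path_prefix[OF kn 2] by auto
      have "k \<inter> h = {}" using kx x by auto
      then have "\<not> path k ! length l" using pp hl by auto
      then have "prefix (l @ [False]) (path k)" using prefix_snoc_nth[OF 2 pp(1)] by simp
      then show ?thesis using kS by (simp add: bin_def)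
    next
      case 3
      then obtain u r1 r2 where u: "l = u @ False # r1" "path k = u @ True # r2" by (auto simp: dl_def)
      define i where "i = length u"
      have i: "i < length l" "\<not> l ! i" "take i l = u" using u by (simp_all add: i_def)
      have "i < length (path k)" "take i (path k) = u" "path k ! i" using u by (simp_all add: i_def)
      then have "test n d u \<inter> k \<noteq> {}" using path_prefix_nth[OF kn prefix_order.refl] by metis
      moreover have "H ! i = test n d u" using Hi[OF i(1)] i(3) by simp
      moreover have "H ! i \<subseteq> Z" using i by (auto simp: Z_def)
      ultimately show ?thesis using kx x by auto
    next
      case 4
      obtain q where q0: "q \<in> set (queue st)" "prefix (fst q) (path k)"
        using cov unfolding covered_def by blast
      then have q: "q \<in> set ((l, v, H) # Q)" "prefix (fst q) (path k)" using Qa by simp_all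
      show ?thesis
      proof (cases "q = (l, v, H)")
        case True then show ?thesis using q 4 dl_not_prefix2 by auto
      next
        case False
        then have "q \<in> set Q" using q by simp
        then have "dl l (fst q)" using sorted by simp
        then have "dl (path k) (fst q)" using 4 dl_trans by blast
        then show ?thesis using q dl_not_prefix2 by blast
      qed
    qed
  qed
  have C: "Pow x \<inter> S = bin (l @ [False]) \<union> U"
    using c1 c3 by (auto simp: U_def bin_def)
  have D: "bin (l @ [False]) \<inter> U = {}" using c2 by (auto simp: U_def)
  have E: "sum F (Pow x \<inter> S) = sum F (bin (l @ [False])) + sum F U"
    unfolding C using D bin_fin xfin by (intro sum.union_disjoint) (auto simp: U_def)
  show ?thesis unfolding x_def[symmetric] using fx A B E by simp
qed

end



context fa begin

definition cstep :: "nat \<Rightarrow> real" where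
  "cstep N = 1 + log 2 (real N + 1) + 2 * real n + real s * (real d + 1)"

lemma cstep_mono: "N \<le> M \<Longrightarrow> cstep N \<le> cstep M"
  unfolding cstep_def by simp

lemma cstep_nonneg: "0 \<le> cstep N"
  unfolding cstep_def by simp

lemma Phi_Cons: "Phi (q # Q) = 3 * card (TrB (fst q)) + 1 + Phi Q"
  by (simp add: Phi_def)

lemma Psi_Cons: "Psi (q # Q) = card (TrB (fst q)) + Psi Q"
  by (simp add: Psi_def)

lemma Phi_ins: "Phi (pq_insert q Q) = 3 * card (TrB (fst q)) + 1 + Phi Q"
  unfolding Phi_def by (rule pq_insert_sum)

lemma Psi_ins: "Psi (pq_insert q Q) = card (TrB (fst q)) + Psi Q"
  unfolding Psi_def by (rule pq_insert_sum)

lemma tabcost: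
  assumes I: "Inv st"
  shows "(\<Sum>k\<in>{k. table st k \<noteq> 0}. real (card k) + 1) \<le> real s * (real d + 1)"
proof -
  have sub: "{k. table st k \<noteq> 0} \<subseteq> S" using I by (auto simp: Inv_def split: if_splits)
  have "(\<Sum>k\<in>{k. table st k \<noteq> 0}. real (card k) + 1) \<le> (\<Sum>k\<in>S. real (card k) + 1)"
    by (rule sum_mono2[OF S_fin sub]) auto
  also have "\<dots> \<le> of_nat (card S) * (real d + 1)"
    by (rule sum_bounded_above) (use S_card in auto)
  also have "\<dots> \<le> real s * (real d + 1)" using S_cardS by (intro mult_right_mono) auto
  finally show ?thesis .
qed

lemma cov_Cons: "covered (q # Q) k \<longleftrightarrow> prefix (fst q) (path k) \<or> covered Q k"
  by (auto simp: covered_def)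

lemma pfree:
  assumes sorted: "sorted_wrt (\<lambda>x y. dl (fst x) (fst y)) ((l, v, H) # Q)"
    and p: "prefix l (path k)"
  shows "\<not> covered Q k"
proof
  assume "covered Q k"
  then obtain q where q: "q \<in> set Q" "prefix (fst q) (path k)" by (auto simp: covered_def)
  have "dl l (fst q)" using sorted q by simp
  moreover have "prefix l (fst q) \<or> prefix (fst q) l" using p q(2) prefix_same_cases by blast
  ultimately show False using dl_not_prefix1 dl_not_prefix2 by blast
qed

lemma step_inv:
  assumes I: "Inv st" and Qa: "queue st = (l, v, H) # Q"
  shows "Inv (fasmt_step n d f st) \<and> Phi (queue (fasmt_step n d f st)) < Phi (queue st) \<and>
         nqueries (fasmt_step n d f st) + Psi (queue (fasmt_step n d f st)) \<le> nqueries st + Psi (queue st) \<and>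
         cost (fasmt_step n d f st) \<le> cost st + cstep (Phi (queue st))"
proof -
  have sorted: "sorted_wrt (\<lambda>x y. dl (fst x) (fst y)) ((l, v, H) # Q)" using I Qa by (simp add: Inv_def)
  have ents: "\<forall>q\<in>set ((l, v, H) # Q). ent q" using I Qa by (simp add: Inv_def)
  have tab: "\<And>k. table st k = (if k \<in> S \<and> \<not> covered ((l, v, H) # Q) k then F k else 0)"
    using I Qa by (simp add: Inv_def)
  have unc: "\<And>k. k \<in> S \<Longrightarrow> \<not> covered ((l, v, H) # Q) k \<Longrightarrow> \<forall>q\<in>set ((l, v, H) # Q). dl (path k) (fst q)"
    using I Qa by (simp add: Inv_def)
  have vbin: "v = sum F (bin l)" using ents by (simp add: ent_def)
  define base where "base = cost st + 1 + log 2 (real (length (queue st)) + 1)"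
  have base_le: "base \<le> cost st + 1 + log 2 (real (Phi (queue st)) + 1)"
    unfolding base_def using len_Phi[of "queue st"] by simp
  have tc: "(\<Sum>k\<in>{k. table st k \<noteq> 0}. real (card k) + 1) \<le> real s * (real d + 1)"
    using tabcost[OF I] .
  have nn: "0 \<le> real s * (real d + 1)" by simp
  have covl: "\<And>k. k \<in> S \<Longrightarrow> prefix l (path k) \<longleftrightarrow> k \<in> bin l" by (simp add: bin_def)
  show ?thesis
  proof (cases "v = 0")
    case True
    have binE: "bin l = {}"
    proof (rule ccontr)
      assume "bin l \<noteq> {}"
      then have "sum F (bin l) \<noteq> 0" using indep by (auto simp: bin_def)
      then show False using vbin True by simp
    qed
    have st': "fasmt_step n d f st = st\<lparr>queue := Q, cost := base\<rparr>"
      using True by (simp add: fasmt_step_def Qa base_def)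
    have cv: "\<And>k. k \<in> S \<Longrightarrow> covered ((l, v, H) # Q) k = covered Q k"
      using binE covl by (auto simp: cov_Cons)
    have "Inv (st\<lparr>queue := Q, cost := base\<rparr>)"
      unfolding Inv_def using sorted ents unc cv by (auto simp: tab)
    moreover have "Phi Q < Phi (queue st)" using Qa Phi_Cons by simp
    moreover have "Psi Q \<le> Psi (queue st)" using Qa Psi_Cons by simp
    moreover have "base \<le> cost st + cstep (Phi (queue st))"
      using base_le nn unfolding cstep_def by linarith
    ultimately show ?thesis using st' by simp
  next
    case vne: False
    have binne: "bin l \<noteq> {}" using vne vbin by auto
    then have lTr: "l \<in> Tr" by (rule bin_Tr)
    show ?thesis
    proof (cases "gbsa n d l")
      case (GResult K)
      have binK: "bin l = {K}" using bin_result[OF GResult] binne by auto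
      then have KS: "K \<in> S" and pK: "prefix l (path K)" by (auto simp: bin_def)
      have lK: "l = path K" using path_result[OF S_sub[OF KS] pK GResult] by simp
      have vK: "v = F K" using vbin binK by simp
      have st': "fasmt_step n d f st = st\<lparr>queue := Q, table := (table st)(K := v), cost := base + real n\<rparr>"
        using vne GResult by (simp add: fasmt_step_def Qa base_def)
      have ncK: "\<not> covered Q K" using pfree[OF sorted pK] .
      have cv: "\<And>k. k \<in> S \<Longrightarrow> k \<noteq> K \<Longrightarrow> covered ((l, v, H) # Q) k = covered Q k"
        using binK covl by (auto simp: cov_Cons)
      have "\<forall>k. ((table st)(K := v)) k = (if k \<in> S \<and> \<not> covered Q k then F k else 0)"
        using KS ncK vK cv by (auto simp: tab)
      moreover have "\<forall>k\<in>S. \<not> covered Q k \<longrightarrow> (\<forall>q\<in>set Q. dl (path k) (fst q))"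
      proof (intro ballI impI)
        fix k q assume k: "k \<in> S" "\<not> covered Q k" and q: "q \<in> set Q"
        show "dl (path k) (fst q)"
        proof (cases "k = K")
          case True then show ?thesis using lK sorted q by simp
        next
          case False then show ?thesis using unc[OF k(1)] cv[OF k(1) False] k(2) q by simp
        qed
      qed
      ultimately have "Inv (st\<lparr>queue := Q, table := (table st)(K := v), cost := base + real n\<rparr>)"
        unfolding Inv_def using sorted ents by simp
      moreover have "Phi Q < Phi (queue st)" using Qa Phi_Cons by simp
      moreover have "Psi Q \<le> Psi (queue st)" using Qa Psi_Cons by simp
      moreover have "base + real n \<le> cost st + cstep (Phi (queue st))"
        using base_le nn unfolding cstep_def by linarith
      ultimately show ?thesis using st' by simp
    next
      case (GTest h)
      define x where "x = query_point n l H h"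
      define m where "m = f x - (\<Sum>k\<in>Pow x. table st k)"
      define c0 where "c0 = (l @ [False], m, H @ [h])"
      define c1 where "c1 = (l @ [True], v - m, H @ [h])"
      define Q' where "Q' = pq_insert c1 (pq_insert c0 Q)"
      define tc where "tc = (\<Sum>k\<in>{k. table st k \<noteq> 0}. real (card k) + 1)"
      have st': "fasmt_step n d f st = st\<lparr>queue := Q', nqueries := Suc (nqueries st),
                     cost := base + 2 * real n + tc\<rparr>"
        using vne GTest by (simp add: fasmt_step_def Qa base_def Let_def Q'_def c0_def c1_def m_def x_def tc_def)
      have m: "m = sum F (bin (l @ [False]))"
        unfolding m_def x_def using query_sum[OF I Qa GTest] .
      have bs: "bin l = bin (l @ [False]) \<union> bin (l @ [True])" "bin (l @ [False]) \<inter> bin (l @ [True]) = {}"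
        using bin_split[OF GTest] by auto
      have vm: "v - m = sum F (bin (l @ [True]))"
        using vbin m bs bin_fin by (simp add: sum.union_disjoint)
      have setQ': "set Q' = {c1, c0} \<union> set Q" by (simp add: Q'_def pq_insert_set)
      have entl: "ent (l, v, H)" using ents by simp
      have ent_child: "ent (l @ [b], w, H @ [h])" if "w = sum F (bin (l @ [b]))" for b w
        unfolding ent_def
      proof (intro conjI allI impI)
        show "fst (snd (l @ [b], w, H @ [h])) = sum F (bin (fst (l @ [b], w, H @ [h])))" using that by simp
        show "length (snd (snd (l @ [b], w, H @ [h]))) = length (fst (l @ [b], w, H @ [h]))"
          using entl by (simp add: ent_def)
      next
        fix i assume i: "i < length (fst (l @ [b], w, H @ [h]))"
        have lH: "length H = length l" using entl by (simp add: ent_def)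
        show "gbsa n d (take i (fst (l @ [b], w, H @ [h]))) = GTest (snd (snd (l @ [b], w, H @ [h])) ! i)"
        proof (cases "i < length l")
          case True then show ?thesis using entl lH by (simp add: ent_def nth_append)
        next
          case False then have "i = length l" using i by simp
          then show ?thesis using GTest lH by (simp add: nth_append)
        qed
      qed
      have e0: "ent c0" unfolding c0_def using ent_child m by simp
      have e1: "ent c1" unfolding c1_def using ent_child vm by simp
      have sQ: "sorted_wrt (\<lambda>x y. dl (fst x) (fst y)) Q" using sorted by simp
      have dQ: "\<And>q b. q \<in> set Q \<Longrightarrow> dl (l @ [b]) (fst q)"
        using sorted dl_prefix1[of l _ "l @ [_]"] by (simp add: prefix_def)
      have s0: "sorted_wrt (\<lambda>x y. dl (fst x) (fst y)) (pq_insert c0 Q)"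
        using sQ dQ by (intro pq_insert_sorted) (auto simp: c0_def)
      have d01: "dl (l @ [False]) (l @ [True])" unfolding dl_def by auto
      have s1: "sorted_wrt (\<lambda>x y. dl (fst x) (fst y)) Q'"
      proof -
        have "\<forall>e'\<in>set (pq_insert c0 Q). dl (fst c1) (fst e') \<or> dl (fst e') (fst c1)"
          using dQ d01 by (auto simp: c0_def c1_def pq_insert_set)
        then show ?thesis unfolding Q'_def using pq_insert_sorted[OF s0] by blast
      qed
      have cv: "\<And>k. k \<in> S \<Longrightarrow> covered Q' k = covered ((l, v, H) # Q) k"
      proof -
        fix k assume k: "k \<in> S"
        have "covered Q' k = (k \<in> bin (l @ [False]) \<or> k \<in> bin (l @ [True]) \<or> covered Q k)"
          using k by (auto simp: covered_def setQ' c0_def c1_def bin_def)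
        also have "\<dots> = (k \<in> bin l \<or> covered Q k)" using bs by auto
        also have "\<dots> = covered ((l, v, H) # Q) k" using covl[OF k] by (simp add: cov_Cons)
        finally show "covered Q' k = covered ((l, v, H) # Q) k" .
      qed
      have tabQ': "\<forall>k. table st k = (if k \<in> S \<and> \<not> covered Q' k then F k else 0)"
        using cv by (auto simp: tab)
      have uncQ': "\<forall>k\<in>S. \<not> covered Q' k \<longrightarrow> (\<forall>q\<in>set Q'. dl (path k) (fst q))"
      proof (intro ballI impI)
        fix k q assume k: "k \<in> S" "\<not> covered Q' k" and q: "q \<in> set Q'"
        have u: "\<forall>q\<in>set ((l, v, H) # Q). dl (path k) (fst q)" using unc[OF k(1)] cv[OF k(1)] k(2) by simp
        then have "dl (path k) (l @ [b])" for b using dl_prefix2[of "path k" l "l @ [b]"] by simp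
        then show "dl (path k) (fst q)" using q u by (auto simp: setQ' c0_def c1_def)
      qed
      have "Inv (st\<lparr>queue := Q', nqueries := Suc (nqueries st), cost := base + 2 * real n + tc\<rparr>)"
        unfolding Inv_def using s1 ents e0 e1 tabQ' uncQ' by (auto simp: setQ')
      moreover have PhiQ': "Phi Q' < Phi (queue st)"
        using TrB_split[OF lTr] by (simp add: Q'_def Phi_ins Qa Phi_Cons c0_def c1_def)
      moreover have "Suc (nqueries st) + Psi Q' \<le> nqueries st + Psi (queue st)"
        using TrB_split[OF lTr] by (simp add: Q'_def Psi_ins Qa Psi_Cons c0_def c1_def)
      moreover have "base + 2 * real n + tc \<le> cost st + cstep (Phi (queue st))"
        using base_le tc unfolding cstep_def tc_def by linarith
      ultimately show ?thesis using st' by simp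
    qed
  qed
qed

end



context fa begin

lemma iter:
  "Inv st \<Longrightarrow> \<exists>t. queue ((fasmt_step n d f ^^ t) st) = [] \<and> Inv ((fasmt_step n d f ^^ t) st) \<and>
     nqueries ((fasmt_step n d f ^^ t) st) \<le> nqueries st + Psi (queue st) \<and>
     cost ((fasmt_step n d f ^^ t) st) \<le> cost st + real (Phi (queue st)) * cstep (Phi (queue st))"
proof (induction "Phi (queue st)" arbitrary: st rule: less_induct)
  case less
  show ?case
  proof (cases "queue st")
    case Nil
    then show ?thesis using less.prems by (intro exI[of _ 0]) (simp add: Phi_def)
  next
    case (Cons q Q)
    obtain l v H where q: "q = (l, v, H)" by (cases q) auto
    define st' where "st' = fasmt_step n d f st"
    have st: "Inv st'" "Phi (queue st') < Phi (queue st)"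
      "nqueries st' + Psi (queue st') \<le> nqueries st + Psi (queue st)"
      "cost st' \<le> cost st + cstep (Phi (queue st))"
      using step_inv[OF less.prems, of l v H Q] Cons q by (simp_all add: st'_def)
    obtain t where t: "queue ((fasmt_step n d f ^^ t) st') = []" "Inv ((fasmt_step n d f ^^ t) st')"
      "nqueries ((fasmt_step n d f ^^ t) st') \<le> nqueries st' + Psi (queue st')"
      "cost ((fasmt_step n d f ^^ t) st') \<le> cost st' + real (Phi (queue st')) * cstep (Phi (queue st'))"
      using less.hyps[OF st(2) st(1)] by blast
    have eq: "(fasmt_step n d f ^^ Suc t) st = (fasmt_step n d f ^^ t) st'"
      by (simp add: st'_def funpow_Suc_right del: funpow.simps)
    have c1: "real (Phi (queue st')) * cstep (Phi (queue st')) \<le> real (Phi (queue st')) * cstep (Phi (queue st))"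
      using st(2) by (intro mult_left_mono cstep_mono) auto
    have c2: "cstep (Phi (queue st)) + real (Phi (queue st')) * cstep (Phi (queue st)) \<le> real (Phi (queue st)) * cstep (Phi (queue st))"
    proof -
      have "real (Phi (queue st')) + 1 \<le> real (Phi (queue st))" using st(2) by linarith
      then have "(real (Phi (queue st')) + 1) * cstep (Phi (queue st)) \<le> real (Phi (queue st)) * cstep (Phi (queue st))"
        using cstep_nonneg by (intro mult_right_mono) auto
      then show ?thesis by (simp add: algebra_simps)
    qed
    show ?thesis
    proof (intro exI[of _ "Suc t"] conjI)
      show "queue ((fasmt_step n d f ^^ Suc t) st) = []" using t eq by simp
      show "Inv ((fasmt_step n d f ^^ Suc t) st)" using t eq by simp
      show "nqueries ((fasmt_step n d f ^^ Suc t) st) \<le> nqueries st + Psi (queue st)"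
        using t(3) st(3) eq by simp
      show "cost ((fasmt_step n d f ^^ Suc t) st) \<le> cost st + real (Phi (queue st)) * cstep (Phi (queue st))"
        using t(4) st(4) eq c1 c2 by simp
    qed
  qed
qed

lemma S_Pow: "sum F (Pow {..<n}) = sum F S"
proof (rule sum.mono_neutral_right)
  show "S \<subseteq> Pow {..<n}" using S_sub by auto
  show "\<forall>i\<in>Pow {..<n} - S. F i = 0" using notS by blast
qed simp

lemma init_inv: "Inv (fasmt_init n f)"
proof -
  have b: "bin [] = S" by (auto simp: bin_def)
  have fn: "f {..<n} = sum F S" using mob S_Pow by (simp add: is_mobius_coeffs_def)
  have cov: "\<And>k. covered [([], f {..<n}, [])] k" by (simp add: covered_def)
  show ?thesis unfolding Inv_def fasmt_init_def using b fn cov by (simp add: ent_def)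
qed

lemma TrB_Nil: "TrB [] = Tr" by (auto simp: TrB_def)

lemma main_fa:
  "\<exists>t. queue (fasmt_iter n d f t) = [] \<and> table (fasmt_iter n d f t) = F \<and>
     nqueries (fasmt_iter n d f t) \<le> 1 + card Tr \<and>
     cost (fasmt_iter n d f t) \<le> real n + real (3 * card Tr + 1) * cstep (3 * card Tr + 1)"
proof -
  obtain t where t: "queue ((fasmt_step n d f ^^ t) (fasmt_init n f)) = []" "Inv ((fasmt_step n d f ^^ t) (fasmt_init n f))"
     "nqueries ((fasmt_step n d f ^^ t) (fasmt_init n f)) \<le> nqueries (fasmt_init n f) + Psi (queue (fasmt_init n f))"
     "cost ((fasmt_step n d f ^^ t) (fasmt_init n f)) \<le> cost (fasmt_init n f) + real (Phi (queue (fasmt_init n f))) * cstep (Phi (queue (fasmt_init n f)))"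
    using iter[OF init_inv] by blast
  have tab: "table ((fasmt_step n d f ^^ t) (fasmt_init n f)) = F"
  proof
    fix k
    show "table ((fasmt_step n d f ^^ t) (fasmt_init n f)) k = F k"
      using t(1,2) notS by (auto simp: Inv_def covered_def)
  qed
  show ?thesis
    using t tab by (intro exI[of _ t]) (simp add: fasmt_iter_def fasmt_init_def Phi_def Psi_def TrB_Nil)
qed

end



lemma arith_final:
  fixes s d n e N G L :: real
  assumes s: "1 \<le> s" and d: "1 \<le> d" and n: "1 \<le> n" and L0: "0 \<le> L" and Ln: "L \<le> n"
    and e: "e \<le> 2 + L" and e0: "0 \<le> e" and N0: "0 \<le> N" and N: "N \<le> s * (d * (2 + e) + 1)"
    and G0: "0 \<le> G" and G: "G \<le> 12 + s + d + L"
  shows "1 + N \<le> 6 * s * d * (1 + L)"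
    and "n + (3 * N + 1) * (1 + G + 2 * n + s * (d + 1)) \<le> 200 * (s * d + n) * s * d * (1 + L)"
proof -
  define P where "P = s * d"
  define X where "X = P * (1 + L)"
  define Y where "Y = P + n"
  have P1: "1 \<le> P" unfolding P_def using mult_mono[OF s d] s by simp
  have sP: "s \<le> P" unfolding P_def using mult_left_mono[OF d, of s] s by simp
  have dP: "d \<le> P" unfolding P_def using mult_right_mono[OF s, of d] d by simp
  have PX: "P \<le> X" unfolding X_def using mult_left_mono[of 1 "1 + L" P] L0 P1 by simp
  have de: "d * (2 + e) \<le> d * (4 + L)" using mult_left_mono[of "2 + e" "4 + L" d] e d by simp
  have "s * (d * (2 + e) + 1) \<le> s * (d * (4 + L) + 1)"
    using mult_left_mono[of "d * (2 + e) + 1" "d * (4 + L) + 1" s] de s by simp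
  then have "N \<le> s * (d * (4 + L) + 1)" using N by linarith
  also have "\<dots> = P * (4 + L) + s" unfolding P_def by (simp add: algebra_simps)
  also have "\<dots> \<le> P * (5 + L)" using sP by (simp add: algebra_simps)
  also have "\<dots> \<le> 5 * X"
  proof -
    have "0 \<le> P * L" using P1 L0 by simp
    then show ?thesis unfolding X_def by (simp add: algebra_simps)
  qed
  finally have N5: "N \<le> 5 * X" .
  have X6: "6 * X = 6 * s * d * (1 + L)" unfolding X_def P_def by (simp add: algebra_simps)
  show "1 + N \<le> 6 * s * d * (1 + L)" using N5 PX P1 X6 by linarith
  have sd1: "s * (d + 1) = P + s" unfolding P_def by (simp add: algebra_simps)
  have c: "1 + G + 2 * n + s * (d + 1) \<le> 11 * Y"
  proof -
    have "11 * Y = 11 * P + 11 * n" unfolding Y_def by simp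
    then show ?thesis unfolding sd1 using G sP dP Ln P1 n by linarith
  qed
  have c0: "0 \<le> 1 + G + 2 * n + s * (d + 1)" using G0 n s d by simp
  have N16: "3 * N + 1 \<le> 16 * X" using N5 PX P1 by linarith
  have "(3 * N + 1) * (1 + G + 2 * n + s * (d + 1)) \<le> (16 * X) * (11 * Y)"
    using mult_mono[OF N16 c] c0 PX P1 by simp
  moreover have "n \<le> X * Y"
  proof -
    have "Y \<le> X * Y" using mult_right_mono[of 1 X Y] PX P1 n unfolding Y_def by simp
    then show ?thesis unfolding Y_def using P1 by linarith
  qed
  moreover have "0 \<le> X * Y" using PX P1 n unfolding Y_def by simp
  moreover have "200 * (s * d + n) * s * d * (1 + L) = 200 * (X * Y)"
    unfolding X_def Y_def P_def by (simp add: algebra_simps)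
  ultimately show "n + (3 * N + 1) * (1 + G + 2 * n + s * (d + 1)) \<le> 200 * (s * d + n) * s * d * (1 + L)"
    by (simp add: algebra_simps) 
qed



lemma log2_le_self: "1 \<le> m \<Longrightarrow> log 2 (real m) \<le> real m"
  using log2_of_power_less[of m m] less_exp[of m] by simp

context fa begin

definition L :: real where "L = log 2 (real n / real d)"

lemma nd1: "1 \<le> real n / real d" using d1 dn by simp

lemma L0: "0 \<le> L" unfolding L_def using nd1 by simp

lemma Ln: "L \<le> real n"
proof -
  have "real n * 1 \<le> real n * real d" using d1 by (intro mult_left_mono) auto
  then have "real n / real d \<le> real n" using d1 by (simp add: divide_le_eq)
  then have "L \<le> log 2 (real n)" unfolding L_def using nd1 by simp
  also have "\<dots> \<le> real n" using log2_le_self[of n] d1 dn by simp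
  finally show ?thesis .
qed

lemma e_le: "real e \<le> 2 + L"
proof -
  define m where "m = real (n div d + 1)"
  have m1: "1 \<le> m" by (simp add: m_def)
  have "real e = of_int \<lceil>log 2 m\<rceil>" using m1 by (simp add: e_def m_def)
  also have "\<dots> \<le> log 2 m + 1" by linarith
  also have "log 2 m \<le> log 2 (2 * (real n / real d))"
  proof -
    have "real (n div d) \<le> real n / real d" by (rule of_nat_div_le_of_nat)
    then have "m \<le> 2 * (real n / real d)" using nd1 by (simp add: m_def)
    then show ?thesis using m1 by simp
  qed
  also have "log 2 (2 * (real n / real d)) = 1 + L"
  proof -
    have "log 2 (2 * (real n / real d)) = log 2 2 + log 2 (real n / real d)"
      by (rule log_mult_pos) (use nd1 in auto)
    then show ?thesis unfolding L_def by simp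
  qed
  finally show ?thesis by simp
qed

lemma lg_bound: "log 2 (real (3 * card Tr + 1) + 1) \<le> 12 + real s + real d + L"
proof -
  define A where "A = s * (d * (2 + e))"
  have A2: "2 * s \<le> A"
  proof -
    have "1 * 2 \<le> d * (2 + e)" by (rule mult_le_mono) (use d1 in auto)
    then show ?thesis unfolding A_def using mult_le_mono2[of 2 "d * (2 + e)" s] by (simp add: mult.commute)
  qed
  have "3 * card Tr + 2 \<le> 3 * (A + s) + 2"
    using Tr_card unfolding A_def by (simp add: algebra_simps)
  also have "\<dots> = 3 * A + 3 * s + 2" by simp
  also have "\<dots> \<le> 8 * A" using A2 s1 by linarith
  finally have nat: "3 * card Tr + 2 \<le> 8 * A" .
  have "log 2 (real (3 * card Tr + 1) + 1) = log 2 (real (3 * card Tr + 2))" by simp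
  also have "\<dots> \<le> log 2 (real (8 * A))" using nat by simp
  also have "real (8 * A) = 8 * real s * real d * real (2 + e)" by (simp add: A_def algebra_simps)
  also have "log 2 (8 * real s * real d * real (2 + e)) = log 2 8 + log 2 (real s) + log 2 (real d) + log 2 (real (2 + e))"
    using s1 d1 by (simp add: log_mult)
  also have "\<dots> \<le> 8 + real s + real d + real (2 + e)"
    using log2_le_self[of 8] log2_le_self[of s] log2_le_self[of d] log2_le_self[of "2 + e"] s1 d1 by simp
  also have "\<dots> \<le> 12 + real s + real d + L" using e_le by simp
  finally show ?thesis .
qed

lemma final:
  "\<exists>t. queue (fasmt_iter n d f t) = [] \<and> table (fasmt_iter n d f t) = F \<and>
       real (nqueries (fasmt_iter n d f t)) \<le> 6 * real s * real d * (1 + log 2 (real n / real d)) \<and>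
       cost (fasmt_iter n d f t) \<le> 200 * (real s * real d + real n) * real s * real d * (1 + log 2 (real n / real d))"
proof -
  obtain t where t: "queue (fasmt_iter n d f t) = []" "table (fasmt_iter n d f t) = F"
     "nqueries (fasmt_iter n d f t) \<le> 1 + card Tr"
     "cost (fasmt_iter n d f t) \<le> real n + real (3 * card Tr + 1) * cstep (3 * card Tr + 1)"
    using main_fa by blast
  have N: "real (card Tr) \<le> real s * (real d * (2 + real e) + 1)"
  proof -
    have "real (card Tr) \<le> real (s * (d * (2 + e) + 1))" using Tr_card by (simp only: of_nat_le_iff)
    then show ?thesis by (simp add: algebra_simps)
  qed
  have G0: "0 \<le> log 2 (real (3 * card Tr + 1) + 1)" by simp
  note ar = arith_final[of "real s" "real d" "real n" L "real e" "real (card Tr)" "log 2 (real (3 * card Tr + 1) + 1)",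
      OF _ _ _ L0 Ln e_le _ _ N G0]
  have a1: "1 + real (card Tr) \<le> 6 * real s * real d * (1 + L)" using ar(1) s1 d1 dn lg_bound by simp
  have a2: "real n + (3 * real (card Tr) + 1) * (1 + log 2 (real (3 * card Tr + 1) + 1) + 2 * real n + real s * (real d + 1))
      \<le> 200 * (real s * real d + real n) * real s * real d * (1 + L)"
    using ar(2) s1 d1 dn lg_bound by simp
  show ?thesis
  proof (intro exI[of _ t] conjI)
    show "queue (fasmt_iter n d f t) = []" "table (fasmt_iter n d f t) = F" using t by simp_all
    have "real (nqueries (fasmt_iter n d f t)) \<le> 1 + real (card Tr)" using t(3) by linarith
    then show "real (nqueries (fasmt_iter n d f t)) \<le> 6 * real s * real d * (1 + log 2 (real n / real d))"
      using a1 unfolding L_def by linarith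
    have "real (3 * card Tr + 1) * cstep (3 * card Tr + 1) = (3 * real (card Tr) + 1) * (1 + log 2 (real (3 * card Tr + 1) + 1) + 2 * real n + real s * (real d + 1))"
      by (simp add: cstep_def)
    then show "cost (fasmt_iter n d f t) \<le> 200 * (real s * real d + real n) * real s * real d * (1 + log 2 (real n / real d))"
      using t(4) a2 unfolding L_def by linarith
  qed
qed

end

theorem theorem2:
  "\<exists>C1 C2 :: real.
     \<forall>(n::nat) (d::nat) (s::nat) (f::nat set \<Rightarrow> real) (F::nat set \<Rightarrow> real).
       1 \<le> s \<longrightarrow> 1 \<le> d \<longrightarrow> d \<le> n \<longrightarrow>
       is_mobius_coeffs n f F \<longrightarrow> sparse s F \<longrightarrow> degree_le d F \<longrightarrow>
       subset_sum_independent F \<longrightarrow>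
       (\<exists>t. queue (fasmt_iter n d f t) = [] \<and>
            table (fasmt_iter n d f t) = F \<and>
            real (nqueries (fasmt_iter n d f t))
              \<le> C1 * real s * real d * (1 + log 2 (real n / real d)) \<and>
            cost (fasmt_iter n d f t)
              \<le> C2 * (real s * real d + real n) * real s * real d * (1 + log 2 (real n / real d)))"
proof (rule exI[of _ 6], rule exI[of _ 200], intro allI impI)
  fix n d s :: nat and f F :: "nat set \<Rightarrow> real"
  assume "1 \<le> s" "1 \<le> d" "d \<le> n" "is_mobius_coeffs n f F" "sparse s F" "degree_le d F" "subset_sum_independent F"
  then interpret fa n d s f F by unfold_locales
  show "\<exists>t. queue (fasmt_iter n d f t) = [] \<and>
            table (fasmt_iter n d f t) = F \<and>
            real (nqueries (fasmt_iter n d f t))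
              \<le> 6 * real s * real d * (1 + log 2 (real n / real d)) \<and>
            cost (fasmt_iter n d f t)
              \<le> 200 * (real s * real d + real n) * real s * real d * (1 + log 2 (real n / real d))"
    using final by blast
qed


end
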